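(* Let $a_1,a_2,b_1,b_2>0$ be integers, and let $m_1,m_2,n_1,n_2$ be positive integers such that $m_1+m_2>a_1+a_2$, $n_1+n_2>b_1+b_2$, $m_1-m_2=a_1-a_2$, $n_1-n_2=b_1-b_2$ and $\frac{n_1+n_2}{m_1+m_2}=\frac{b_1+b_2}{a_1+a_2}$. Then there exists a $(0,1)$ matrix $Y$ of size $(m_1+m_2)\times(n_1+n_2)$ such that $$Y\begin{bmatrix}\mathbf 1_{n_1}\\-\mathbf 1_{n_2}\end{bmatrix}=\begin{bmatrix}b_1\mathbf 1_{m_1}\\-b_2\mathbf 1_{m_2}\end{bmatrix},\qquad Y^T\begin{bmatrix}\mathbf 1_{m_1}\\-\mathbf 1_{m_2}\end{bmatrix}=\begin{bmatrix}a_1\mathbf 1_{n_1}\\-a_2\mathbf 1_{n_2}\end{bmatrix}.$$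
   Context: $\mathbf 1_p$ denotes the all-ones column vector of length $p$. *)

theory Defs
  imports Complex_Main
begin

definition zero_one_mat :: "nat \<Rightarrow> nat \<Rightarrow> (nat \<Rightarrow> nat \<Rightarrow> int) \<Rightarrow> bool" where
  "zero_one_mat m n Y \<longleftrightarrow> (\<forall>i<m. \<forall>j<n. Y i j \<in> {0, 1})"

end

theory Submission imports Defs begin
lemma sum_split_nat:
  fixes g :: "nat \<Rightarrow> int"
  shows "sum g {..<a+b} = sum g {..<a} + (\<Sum>x<b. g (a+x))"
proof -
  have "sum g {..<a+b} = sum g {0..<a} + sum g {a..<a+b}"
    by (metis atLeast0LessThan sum.atLeastLessThan_concat le_add1 zero_le)
  also have "sum g {a..<a+b} = sum g {0+a..<b+a}" by (simp add: add.commute)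
  also have "\<dots> = (\<Sum>x\<in>{0..<b}. g (x+a))" by (rule sum.shift_bounds_nat_ivl)
  also have "\<dots> = (\<Sum>x<b. g (a+x))" by (simp add: atLeast0LessThan add.commute)
  finally show ?thesis by (simp add: atLeast0LessThan)
qed

lemma sum_mod_block:
  fixes f :: "nat \<Rightarrow> int"
  shows "(\<Sum>x<k*G. f (x mod G)) = of_nat k * (\<Sum>x<G. f x)"
proof (induction k)
  case 0 then show ?case by simp
next
  case (Suc k)
  have "(\<Sum>x<Suc k*G. f (x mod G)) = (\<Sum>x<k*G. f (x mod G)) + (\<Sum>x<G. f ((k*G + x) mod G))"
    unfolding mult_Suc add.commute[of G "k*G"] by (rule sum_split_nat)
  also have "(\<Sum>x<G. f ((k*G + x) mod G)) = (\<Sum>x<G. f x)"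
    by (intro sum.cong) auto
  finally show ?case using Suc by (simp add: distrib_right)
qed

lemma perm_sum:
  fixes F :: "nat \<Rightarrow> int"
  assumes "inj_on h {..<G}" "h ` {..<G} \<subseteq> {..<G}"
  shows "(\<Sum>x<G. F (h x)) = (\<Sum>x<G. F x)"
proof -
  have "h ` {..<G} = {..<G}" using endo_inj_surj assms by blast
  then show ?thesis using sum.reindex[OF assms(1), of F] by simp
qed

lemma count_H:
  assumes "H \<le> (G::nat)"
  shows "(\<Sum>y<G. if y < H then 1 else 0 :: int) = int H"
proof -
  have "(\<Sum>y<G. if y < H then 1 else 0 :: int) = int (card ({..<G} \<inter> {y. y < H}))"
    by (simp add: sum.If_cases)
  also have "{..<G} \<inter> {y. y < H} = {..<H}" using assms by auto
  finally show ?thesis by simp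
qed

lemma circ_count:
  fixes G H L :: nat and c \<sigma> :: int
  assumes G: "G > 0" and HG: "H \<le> G" and dv: "G dvd L" and sg: "\<sigma> = 1 \<or> \<sigma> = -1"
  shows "(\<Sum>x<L. if (c + \<sigma> * int x) mod int G < int H then 1 else 0 :: int) = int (L div G * H)"
proof -
  define f where "f x = (if (c + \<sigma> * int x) mod int G < int H then 1 else 0 :: int)" for x
  have fm: "f x = f (x mod G)" for x
  proof -
    have "(c + \<sigma> * int (x mod G)) mod int G = (c + \<sigma> * int x) mod int G"
    proof -
      have "int (x mod G) = int x mod int G" by (rule of_nat_mod)
      then have "(c + \<sigma> * int (x mod G)) mod int G = (c + (\<sigma> * (int x mod int G)) mod int G) mod int G"
        by (simp only: mod_add_right_eq)
      also have "\<dots> = (c + (\<sigma> * int x) mod int G) mod int G" by (simp only: mod_mult_right_eq)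
      also have "\<dots> = (c + \<sigma> * int x) mod int G" by (rule mod_add_right_eq)
      finally show ?thesis .
    qed
    then show ?thesis by (simp add: f_def)
  qed
  define h where "h x = nat ((c + \<sigma> * int x) mod int G)" for x
  have hlt: "h x < G" for x unfolding h_def using G by (simp add: nat_less_iff)
  have hi: "int (h x) = (c + \<sigma> * int x) mod int G" for x unfolding h_def using G by simp
  have inj: "inj_on h {..<G}"
  proof
    fix x y assume x: "x \<in> {..<G}" and y: "y \<in> {..<G}" and e: "h x = h y"
    then have "(c + \<sigma> * int x) mod int G = (c + \<sigma> * int y) mod int G" using hi[of x] hi[of y] by simp
    then have "int G dvd (c + \<sigma> * int x) - (c + \<sigma> * int y)" by (simp only: mod_eq_dvd_iff)
    then have "int G dvd \<sigma> * (int x - int y)" by (simp add: algebra_simps)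
    then have "int G dvd (int x - int y)" using sg by (auto simp: dvd_diff_commute)
    then have "int x mod int G = int y mod int G" by (simp only: mod_eq_dvd_iff)
    then have "x mod G = y mod G"
      by (simp add: of_nat_mod[symmetric])
    then show "x = y" using x y by simp
  qed
  have fh: "f x = (if h x < H then 1 else 0)" for x
    unfolding f_def using hi[of x] by (simp flip: hi)
  have "(\<Sum>x<G. f x) = (\<Sum>x<G. (\<lambda>y. if y < H then 1 else 0 :: int) (h x))"
    using fh by simp
  also have "\<dots> = (\<Sum>y<G. if y < H then 1 else 0 :: int)"
    by (rule perm_sum[OF inj]) (use hlt in auto)
  also have "\<dots> = int H" by (rule count_H[OF HG])
  finally have s1: "(\<Sum>x<G. f x) = int H" .
  have Leq: "L = (L div G) * G" using dv by simp
  have "(\<Sum>x<L. f x) = (\<Sum>x<(L div G) * G. f x)"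
    by (rule arg_cong[where f="\<lambda>n. \<Sum>x<n. f x", OF Leq])
  also have "\<dots> = (\<Sum>x<(L div G) * G. f (x mod G))" by (intro sum.cong refl fm)
  also have "\<dots> = int (L div G) * int H" using sum_mod_block s1 by simp
  finally show ?thesis unfolding f_def by simp
qed

theorem lemma4p33:
  fixes a1 a2 b1 b2 :: int and m1 m2 n1 n2 :: nat
  assumes "a1 > 0" "a2 > 0" "b1 > 0" "b2 > 0"
    and "m1 > 0" "m2 > 0" "n1 > 0" "n2 > 0"
    and "int (m1 + m2) > a1 + a2" and "int (n1 + n2) > b1 + b2"
    and "int m1 - int m2 = a1 - a2" and "int n1 - int n2 = b1 - b2"
    and "real (n1 + n2) / real (m1 + m2) = real_of_int (b1 + b2) / real_of_int (a1 + a2)"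
  shows "\<exists>Y :: nat \<Rightarrow> nat \<Rightarrow> int. zero_one_mat (m1 + m2) (n1 + n2) Y \<and>
    (\<forall>i < m1 + m2. (\<Sum>j<n1. Y i j) - (\<Sum>j\<in>{n1..<n1+n2}. Y i j)
        = (if i < m1 then b1 else - b2)) \<and>
    (\<forall>j < n1 + n2. (\<Sum>i<m1. Y i j) - (\<Sum>i\<in>{m1..<m1+m2}. Y i j)
        = (if j < n1 then a1 else - a2))"
proof -
  define M where "M = m1 + m2"
  define N where "N = n1 + n2"
  define s where "s = n1 + nat b2"
  define t where "t = m1 + nat a2"
  define G where "G = gcd M N"
  define H where "H = gcd s t"
  have Mp: "M > 0" and Np: "N > 0" using assms unfolding M_def N_def by auto
  have si: "int s = int n1 + b2" unfolding s_def using assms by simp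
  have ti: "int t = int m1 + a2" unfolding t_def using assms by simp
  have "real N * real_of_int (a1 + a2) = real M * real_of_int (b1 + b2)"
    using assms(13) assms(1,2,5) Mp unfolding M_def N_def
    by (simp add: divide_eq_eq eq_divide_eq field_simps)
  then have NA: "int N * (a1 + a2) = int M * (b1 + b2)"
    by (metis of_int_eq_iff of_int_mult of_int_of_nat_eq)
  have e1: "2 * int s = int N + (b1 + b2)" using si assms(12) unfolding N_def by simp
  have e2: "2 * int t = int M + (a1 + a2)" using ti assms(11) unfolding M_def by simp
  have "2 * (int M * int s) = 2 * (int N * int t)"
  proof -
    have "2 * (int M * int s) = int M * (2 * int s)" by simp
    also have "\<dots> = int M * int N + int M * (b1 + b2)" using e1 by (simp add: algebra_simps)
    also have "\<dots> = int N * int M + int N * (a1 + a2)" using NA by simp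
    also have "\<dots> = int N * (2 * int t)" using e2 by (simp add: algebra_simps)
    finally show ?thesis by simp
  qed
  then have MsNt: "M * s = N * t" by (metis mult_left_cancel zero_neq_numeral of_nat_eq_iff of_nat_mult)
  have sN: "s \<le> N" using si assms(10,12) unfolding N_def by simp
  have tM: "t \<le> M" using ti assms(9,11) unfolding M_def by simp
  have Gp: "G > 0" unfolding G_def using Mp by simp
  have GN: "G dvd N" and GM: "G dvd M" unfolding G_def by auto
  have NH: "N * H = s * G"
  proof -
    have "s * G = gcd (s * M) (s * N)" unfolding G_def by (simp add: gcd_mult_distrib_nat)
    also have "\<dots> = gcd (N * t) (N * s)" using MsNt by (simp add: mult.commute)
    also have "\<dots> = N * gcd t s" by (simp add: gcd_mult_distrib_nat)
    finally show ?thesis unfolding H_def by (simp add: gcd.commute)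
  qed
  have MH: "M * H = t * G"
  proof -
    have "t * G = gcd (t * M) (t * N)" unfolding G_def by (simp add: gcd_mult_distrib_nat)
    also have "\<dots> = gcd (M * t) (M * s)" using MsNt by (simp add: mult.commute)
    also have "\<dots> = M * gcd t s" by (simp add: gcd_mult_distrib_nat)
    finally show ?thesis unfolding H_def by (simp add: gcd.commute)
  qed
  have HG: "H \<le> G"
  proof -
    have "N * H \<le> N * G" using NH sN by (simp add: mult_right_mono)
    then show ?thesis using Np by simp
  qed
  have NdH: "N div G * H = s"
  proof -
    have "(N div G * H) * G = s * G" using NH GN by (metis dvd_div_mult_self mult.assoc mult.commute)
    then show ?thesis using Gp by simp
  qed
  have MdH: "M div G * H = t"
  proof -
    have "(M div G * H) * G = t * G" using MH GM by (metis dvd_div_mult_self mult.assoc mult.commute)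
    then show ?thesis using Gp by simp
  qed
  define W where "W i j = (if (int i - int j) mod int G < int H then 1 else 0 :: int)" for i j
  have W01: "W i j \<in> {0, 1}" for i j unfolding W_def by simp
  have rowW: "(\<Sum>j<N. W i j) = int s" for i
  proof -
    have "(\<Sum>j<N. W i j) = (\<Sum>x<N. if (int i + (-1) * int x) mod int G < int H then 1 else 0 :: int)"
      unfolding W_def by simp
    also have "\<dots> = int (N div G * H)" by (rule circ_count[OF Gp HG GN]) simp
    finally show ?thesis using NdH by simp
  qed
  have colW: "(\<Sum>i<M. W i j) = int t" for j
  proof -
    have "(\<Sum>i<M. W i j) = (\<Sum>x<M. if (- int j + 1 * int x) mod int G < int H then 1 else 0 :: int)"
      unfolding W_def by (intro sum.cong refl) (simp add: algebra_simps)
    also have "\<dots> = int (M div G * H)" by (rule circ_count[OF Gp HG GM]) simp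
    finally show ?thesis using MdH by simp
  qed
  define Y where "Y i j = (if (i < m1) = (j < n1) then W i j else 1 - W i j)" for i j
  have spn: "sum g {..<n1} + sum g {n1..<n1+n2} = sum g {..<n1+n2}" for g :: "nat \<Rightarrow> int"
    by (metis atLeast0LessThan sum.atLeastLessThan_concat le_add1 zero_le)
  have spm: "sum g {..<m1} + sum g {m1..<m1+m2} = sum g {..<m1+m2}" for g :: "nat \<Rightarrow> int"
    by (metis atLeast0LessThan sum.atLeastLessThan_concat le_add1 zero_le)
  have "zero_one_mat (m1 + m2) (n1 + n2) Y"
    unfolding zero_one_mat_def Y_def using W01 by (auto simp: W_def)
  moreover have "(\<Sum>j<n1. Y i j) - (\<Sum>j\<in>{n1..<n1+n2}. Y i j) = (if i < m1 then b1 else - b2)"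
    if "i < m1 + m2" for i
  proof (cases "i < m1")
    case True
    have "(\<Sum>j<n1. Y i j) = (\<Sum>j<n1. W i j)" by (intro sum.cong refl) (simp add: Y_def True)
    moreover have "(\<Sum>j\<in>{n1..<n1+n2}. Y i j) = (\<Sum>j\<in>{n1..<n1+n2}. 1 - W i j)"
      by (intro sum.cong refl) (simp add: Y_def True)
    moreover have "(\<Sum>j\<in>{n1..<n1+n2}. 1 - W i j) = int n2 - (\<Sum>j\<in>{n1..<n1+n2}. W i j)"
      by (simp add: sum_subtractf)
    moreover have "(\<Sum>j<n1. W i j) + (\<Sum>j\<in>{n1..<n1+n2}. W i j) = int s"
      using spn rowW unfolding N_def by metis
    ultimately show ?thesis using True si assms(12) by simp
  next
    case False
    have "(\<Sum>j<n1. Y i j) = (\<Sum>j<n1. 1 - W i j)" by (intro sum.cong refl) (simp add: Y_def False)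
    moreover have "(\<Sum>j\<in>{n1..<n1+n2}. Y i j) = (\<Sum>j\<in>{n1..<n1+n2}. W i j)"
      by (intro sum.cong refl) (simp add: Y_def False)
    moreover have "(\<Sum>j<n1. 1 - W i j) = int n1 - (\<Sum>j<n1. W i j)"
      by (simp add: sum_subtractf)
    moreover have "(\<Sum>j<n1. W i j) + (\<Sum>j\<in>{n1..<n1+n2}. W i j) = int s"
      using spn rowW unfolding N_def by metis
    ultimately show ?thesis using False si by simp
  qed
  moreover have "(\<Sum>i<m1. Y i j) - (\<Sum>i\<in>{m1..<m1+m2}. Y i j) = (if j < n1 then a1 else - a2)"
    if "j < n1 + n2" for j
  proof (cases "j < n1")
    case True
    have "(\<Sum>i<m1. Y i j) = (\<Sum>i<m1. W i j)" by (intro sum.cong refl) (simp add: Y_def True)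
    moreover have "(\<Sum>i\<in>{m1..<m1+m2}. Y i j) = (\<Sum>i\<in>{m1..<m1+m2}. 1 - W i j)"
      by (intro sum.cong refl) (simp add: Y_def True)
    moreover have "(\<Sum>i\<in>{m1..<m1+m2}. 1 - W i j) = int m2 - (\<Sum>i\<in>{m1..<m1+m2}. W i j)"
      by (simp add: sum_subtractf)
    moreover have "(\<Sum>i<m1. W i j) + (\<Sum>i\<in>{m1..<m1+m2}. W i j) = int t"
      using spm colW unfolding M_def by metis
    ultimately show ?thesis using True ti assms(11) by simp
  next
    case False
    have "(\<Sum>i<m1. Y i j) = (\<Sum>i<m1. 1 - W i j)" by (intro sum.cong refl) (simp add: Y_def False)
    moreover have "(\<Sum>i\<in>{m1..<m1+m2}. Y i j) = (\<Sum>i\<in>{m1..<m1+m2}. W i j)"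
      by (intro sum.cong refl) (simp add: Y_def False)
    moreover have "(\<Sum>i<m1. 1 - W i j) = int m1 - (\<Sum>i<m1. W i j)"
      by (simp add: sum_subtractf)
    moreover have "(\<Sum>i<m1. W i j) + (\<Sum>i\<in>{m1..<m1+m2}. W i j) = int t"
      using spm colW unfolding M_def by metis
    ultimately show ?thesis using False ti by simp
  qed
  ultimately show ?thesis by blast
qed

end
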